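(* In the symmetric second-price sealed-bid auction with $n=2$ bidders and uniform prior $F=\mathrm{Id}$ on $[0,1]$, and for $0<\delta<\frac{9}{100}$, the operator $\beta\mapsto DU(\vec\beta)$ on $\mathcal{B}_\delta$ is neither monotone, nor pseudo-monotone, nor quasi-monotone (in the senses defined in the context).
   Context: $V:=W^{1,1}(0,1)$ (integrable functions with integrable weak derivative on $(0,1)$). For $\delta>0$, $\mathcal{B}_\delta:=\{\beta\in V:0\le\beta\le1 \text{ a.e.},\ \delta\le\beta'\text{ a.e.},\ \beta(0)=0\}$. Two bidders with values i.i.d. uniform on $[0,1]$. Second-price ex-ante utility of bidder 1 bidding $\beta$ against the other bidding $\tilde\beta$: $U(\beta,\tilde\beta)=\int_0^1\int_0^1\chi_{\{\beta(x)>\tilde\beta(y)\}}(x-\tilde\beta(y))\,\mathrm{d}y\,\mathrm{d}x$. For $\beta\in\mathcal{B}_\delta$, $\vec\beta=(\beta,\beta)$ and $DU(\vec\beta)[d]:=\lim_{\varepsilon\to0}\varepsilon^{-1}(U(\beta+\varepsilon d,\beta)-U(\beta,\beta))$ for $d\in V$ (Gateaux derivative with respect to bidder 1's strategy). The operator is monotone if $(DU(\vec{\tilde\beta})-DU(\vec\beta))[\tilde\beta-\beta]\le0$ for all $\beta,\tilde\beta\in\mathcal{B}_\delta$; pseudo-monotone if for all $\beta,\tilde\beta\in\mathcal{B}_\delta$, $DU(\vec\beta)[\tilde\beta-\beta]\le0$ implies $DU(\vec{\tilde\beta})[\tilde\beta-\beta]\le0$; quasi-monotone if for all $\beta,\tilde\beta\in\mathcal{B}_\delta$,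 $DU(\vec\beta)[\tilde\beta-\beta]<0$ implies $DU(\vec{\tilde\beta})[\tilde\beta-\beta]\le0$. *)

theory Defs
  imports "HOL-Analysis.Analysis"
begin

text \<open>Strategies are real functions; only their values on [0,1] matter.
  Elements of W^{1,1}(0,1) are represented by their absolutely continuous
  representative, i.e. beta x = beta 0 + integral from 0 to x of an
  integrable weak derivative g.\<close>

definition strategies :: "real \<Rightarrow> (real \<Rightarrow> real) set" where
  "strategies \<delta> = {\<beta>. \<exists>g.
      set_integrable lborel {0..1} g \<and>
      (\<forall>x\<in>{0..1}. \<beta> x = \<beta> 0 + (LINT t:{0..x}|lborel. g t)) \<and>
      (AE x in lborel. x \<in> {0<..<1} \<longrightarrow> \<delta> \<le> g x) \<and>
      (AE x in lborel. x \<in> {0<..<1} \<longrightarrow> 0 \<le> \<beta> x \<and> \<beta> x \<le> 1) \<and>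
      \<beta> 0 = 0}"

definition U2 :: "(real \<Rightarrow> real) \<Rightarrow> (real \<Rightarrow> real) \<Rightarrow> real" where
  "U2 \<beta> \<beta>t = (LINT x:{0..1}|lborel. (LINT y:{0..1}|lborel.
      (if \<beta> x > \<beta>t y then x - \<beta>t y else 0)))"

definition DU :: "(real \<Rightarrow> real) \<Rightarrow> (real \<Rightarrow> real) \<Rightarrow> real" where
  "DU \<beta> d = Lim (at 0) (\<lambda>\<epsilon>. (U2 (\<lambda>x. \<beta> x + \<epsilon> * d x) \<beta> - U2 \<beta> \<beta>) / \<epsilon>)"

definition DU_monotone :: "real \<Rightarrow> bool" where
  "DU_monotone \<delta> \<longleftrightarrow> (\<forall>\<beta>\<in>strategies \<delta>. \<forall>\<beta>t\<in>strategies \<delta>.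
      DU \<beta>t (\<lambda>x. \<beta>t x - \<beta> x) - DU \<beta> (\<lambda>x. \<beta>t x - \<beta> x) \<le> 0)"

definition DU_pseudo_monotone :: "real \<Rightarrow> bool" where
  "DU_pseudo_monotone \<delta> \<longleftrightarrow> (\<forall>\<beta>\<in>strategies \<delta>. \<forall>\<beta>t\<in>strategies \<delta>.
      DU \<beta> (\<lambda>x. \<beta>t x - \<beta> x) \<le> 0 \<longrightarrow> DU \<beta>t (\<lambda>x. \<beta>t x - \<beta> x) \<le> 0)"

definition DU_quasi_monotone :: "real \<Rightarrow> bool" where
  "DU_quasi_monotone \<delta> \<longleftrightarrow> (\<forall>\<beta>\<in>strategies \<delta>. \<forall>\<beta>t\<in>strategies \<delta>.
      DU \<beta> (\<lambda>x. \<beta>t x - \<beta> x) < 0 \<longrightarrow> DU \<beta>t (\<lambda>x. \<beta>t x - \<beta> x) \<le> 0)"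

end

theory Submission
  imports Defs
begin


lemma int01:
  fixes f :: "real \<Rightarrow> real"
  assumes [measurable]: "f \<in> borel_measurable borel"
    and b: "\<And>x. 0 \<le> x \<Longrightarrow> x \<le> 1 \<Longrightarrow> \<bar>f x\<bar> \<le> B"
  shows "integrable lborel (\<lambda>x. indicator {0..1} x * f x)"
proof (rule integrableI_bounded_set[where A="{0..1}" and B=B])
  show "AE x in lborel. x \<in> {0..1} \<longrightarrow> norm (indicator {0..1} x * f x) \<le> B"
    using b by (auto simp: indicator_def)
qed (auto simp: indicator_def)

definition Phi :: "(real\<Rightarrow>real) \<Rightarrow> real \<Rightarrow> real \<Rightarrow> real" where
  "Phi \<beta> x c = (LINT y:{0..1}|lborel. (if c > \<beta> y then x - \<beta> y else 0))"

definition mm :: "(real\<Rightarrow>real) \<Rightarrow> real \<Rightarrow> real" where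
  "mm \<beta> c = measure lborel {y\<in>{0..1}. \<beta> y < c}"

lemma meas_Phi:
  fixes \<beta> c :: "real \<Rightarrow> real"
  assumes [measurable]: "\<beta> \<in> borel_measurable borel" "c \<in> borel_measurable borel"
  shows "(\<lambda>x. Phi \<beta> x (c x)) \<in> borel_measurable borel"
proof -
  have "(\<lambda>x. Phi \<beta> x (c x)) = (\<lambda>x. \<integral>y. indicator {0..1} y * (if c x > \<beta> y then x - \<beta> y else 0) \<partial>lborel)"
    by (simp add: Phi_def set_lebesgue_integral_def)
  also have "\<dots> \<in> borel_measurable lborel"
    by measurable
  finally show ?thesis by simp
qed

lemma intS:
  fixes g :: "real \<Rightarrow> real"
  assumes [measurable]: "A \<in> sets lborel" "g \<in> borel_measurable borel" and "A \<subseteq> {0..1}"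
    and b: "\<And>x. 0 \<le> x \<Longrightarrow> x \<le> 1 \<Longrightarrow> \<bar>g x\<bar> \<le> B"
  shows "integrable lborel (\<lambda>x. indicator A x * g x)"
proof (rule integrableI_bounded_set[where A="A" and B=B])
  show "AE x in lborel. x \<in> A \<longrightarrow> norm (indicator A x * g x) \<le> B"
    using b assms(3) by (intro AE_I2) (auto simp: indicator_def)
  have "emeasure lborel A \<le> emeasure lborel {0..1::real}"
    by (rule emeasure_mono) (use assms(3) in auto)
  then show "emeasure lborel A < \<infinity>" by (auto simp: top_unique less_top[symmetric])
qed (use assms(1) in \<open>auto simp: indicator_def\<close>)

lemma finA: "A \<subseteq> {0..1::real} \<Longrightarrow> emeasure lborel A < \<infinity>"
proof -
  assume "A \<subseteq> {0..1::real}"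
  then have "emeasure lborel A \<le> emeasure lborel {0..1::real}"
    by (intro emeasure_mono) auto
  then show ?thesis by (auto simp: top_unique less_top[symmetric])
qed

lemma int_bound:
  fixes g :: "real \<Rightarrow> real"
  assumes [measurable]: "A \<in> sets lborel" "g \<in> borel_measurable borel" and A: "A \<subseteq> {0..1}"
    and b: "\<And>x. 0 \<le> x \<Longrightarrow> x \<le> 1 \<Longrightarrow> \<bar>g x\<bar> \<le> B"
    and K: "\<And>x. x \<in> A \<Longrightarrow> \<bar>g x\<bar> \<le> K"
  shows "\<bar>\<integral>y. indicator A y * g y \<partial>lborel\<bar> \<le> K * measure lborel A"
proof -
  have i1: "integrable lborel (\<lambda>x. indicator A x * g x)" by (rule intS[OF assms(1,2) A b])
  have i2: "integrable lborel (indicator A :: real \<Rightarrow> real)"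
    using finA[OF A] assms(1) by (simp add: integrable_indicator_iff)
  have "\<bar>\<integral>y. indicator A y * g y \<partial>lborel\<bar> \<le> (\<integral>y. \<bar>indicator A y * g y\<bar> \<partial>lborel)"
    using integral_norm_bound[of lborel "\<lambda>y. indicator A y * g y"] by simp
  also have "\<dots> \<le> (\<integral>y. K * indicator A y \<partial>lborel)"
    by (rule integral_mono[OF integrable_abs[OF i1] integrable_mult_right[OF i2]]) (use K in \<open>auto simp: indicator_def\<close>)
  also have "\<dots> = K * measure lborel A"
    using finA[OF A] assms(1) by (simp add: integral_indicator)
  finally show ?thesis .
qed

locale strat =
  fixes \<beta> :: "real \<Rightarrow> real" and s :: real
  assumes bm: "continuous_on UNIV \<beta>" and spos: "0 < s"
    and slope: "\<And>y z. 0 \<le> y \<Longrightarrow> y \<le> z \<Longrightarrow> z \<le> 1 \<Longrightarrow> s*(z-y) \<le> \<beta> z - \<beta> y"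
    and b01: "\<And>y. 0 \<le> y \<Longrightarrow> y \<le> 1 \<Longrightarrow> 0 \<le> \<beta> y \<and> \<beta> y \<le> 1"

context strat
begin

lemma bmeas[measurable]: "\<beta> \<in> borel_measurable borel"
  using borel_measurable_continuous_onI bm by blast

lemma setA[measurable]: "{y\<in>{0..1}. \<beta> y < c} \<in> sets lborel"
  by measurable

lemma setS[measurable]: "{y\<in>{0..1}. c \<le> \<beta> y \<and> \<beta> y < c'} \<in> sets lborel"
  by measurable

lemma Phi_alt: "Phi \<beta> x c = (\<integral>y. indicator {y\<in>{0..1}. \<beta> y < c} y * (x - \<beta> y) \<partial>lborel)"
  unfolding Phi_def set_lebesgue_integral_def
  by (rule Bochner_Integration.integral_cong) (auto simp: indicator_def)

lemma slope_abs: "0 \<le> y \<Longrightarrow> y \<le> 1 \<Longrightarrow> 0 \<le> z \<Longrightarrow> z \<le> 1 \<Longrightarrow> s * \<bar>z - y\<bar> \<le> \<bar>\<beta> z - \<beta> y\<bar>"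
  using slope[of y z] slope[of z y] by (cases "y \<le> z") (auto simp: abs_if)

lemma measS:
  assumes "c \<le> c'"
  shows "measure lborel {y\<in>{0..1}. c \<le> \<beta> y \<and> \<beta> y < c'} \<le> 2 * (c' - c) / s"
proof (cases "{y\<in>{0..1}. c \<le> \<beta> y \<and> \<beta> y < c'} = {}")
  case True show ?thesis unfolding True using assms spos by simp
next
  case False
  then obtain y0 where y0: "y0 \<in> {0..1}" "c \<le> \<beta> y0" "\<beta> y0 < c'" by auto
  let ?L = "(c' - c) / s"
  have sub: "{y\<in>{0..1}. c \<le> \<beta> y \<and> \<beta> y < c'} \<subseteq> {y0 - ?L .. y0 + ?L}"
  proof
    fix y assume y: "y \<in> {y\<in>{0..1}. c \<le> \<beta> y \<and> \<beta> y < c'}"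
    have "s * \<bar>y - y0\<bar> \<le> \<bar>\<beta> y - \<beta> y0\<bar>" using slope_abs[of y0 y] y y0 by auto
    also have "\<dots> \<le> c' - c" using y y0 by auto
    finally have "\<bar>y - y0\<bar> \<le> ?L" using spos by (simp add: field_simps mult.commute)
    then show "y \<in> {y0 - ?L .. y0 + ?L}" by auto
  qed
  have "emeasure lborel {y\<in>{0..1}. c \<le> \<beta> y \<and> \<beta> y < c'} \<le> emeasure lborel {y0 - ?L .. y0 + ?L}"
    by (rule emeasure_mono[OF sub]) auto
  also have "\<dots> = ennreal (2 * ?L)" using assms spos by (simp add: divide_nonneg_nonneg)
  finally show ?thesis
    using assms spos by (simp add: measure_def enn2real_leI divide_nonneg_nonneg)
qed

lemma Phi_incr:
  assumes cc: "c \<le> c'" and x: "0 \<le> x" "x \<le> 1"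
  defines "S \<equiv> {y\<in>{0..1}. c \<le> \<beta> y \<and> \<beta> y < c'}"
  shows "Phi \<beta> x c' - Phi \<beta> x c = (x - \<beta> x) * measure lborel S + (\<integral>y. indicator S y * (\<beta> x - \<beta> y) \<partial>lborel)"
    and "mm \<beta> c' - mm \<beta> c = measure lborel S"
    and "\<bar>Phi \<beta> x c' - Phi \<beta> x c\<bar> \<le> measure lborel S"
    and "c \<le> \<beta> x \<Longrightarrow> \<beta> x \<le> c' \<Longrightarrow> \<bar>\<integral>y. indicator S y * (\<beta> x - \<beta> y) \<partial>lborel\<bar> \<le> (c' - c) * measure lborel S"
proof -
  define A where "A c = {y\<in>{0..1}. \<beta> y < c}" for c
  have [measurable]: "A c \<in> sets lborel" for c unfolding A_def by measurable
  have [measurable]: "S \<in> sets lborel" unfolding S_def by measurable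
  have Ab: "A c \<in> sets borel" for c using \<open>\<And>c. A c \<in> sets lborel\<close> by simp
  have AS: "A c' - A c = S" "A c \<subseteq> A c'" using cc by (auto simp: A_def S_def)
  have Sb: "S \<in> sets borel" using \<open>S \<in> sets lborel\<close> by simp
  have S01: "S \<subseteq> {0..1}" by (auto simp: S_def)
  have xb: "\<bar>x - \<beta> y\<bar> \<le> 1" if "0 \<le> y" "y \<le> 1" for y using b01[OF that] x by auto
  have xb2: "\<bar>\<beta> x - \<beta> y\<bar> \<le> 1" if "0 \<le> y" "y \<le> 1" for y using b01[OF that] b01 x by fastforce
  have iA: "integrable lborel (\<lambda>y. indicator (A c) y * (x - \<beta> y))" for c
    by (rule intS[where B=1]) (auto simp: A_def intro: xb)
  have iS: "integrable lborel (\<lambda>y. indicator S y * (x - \<beta> y))"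
    by (rule intS[where B=1]) (auto simp: S_def intro: xb)
  have iS2: "integrable lborel (\<lambda>y. indicator S y * (\<beta> x - \<beta> y))"
    by (rule intS[where B=1]) (auto simp: S_def intro: xb2)
  have iS3: "integrable lborel (\<lambda>y. (x - \<beta> x) * indicator S y)"
    using finA[OF S01] Sb by (simp add: integrable_indicator_iff)
  have d1: "Phi \<beta> x c' - Phi \<beta> x c = (\<integral>y. indicator S y * (x - \<beta> y) \<partial>lborel)"
  proof -
    have "Phi \<beta> x c' - Phi \<beta> x c = (\<integral>y. indicator (A c') y * (x - \<beta> y) - indicator (A c) y * (x - \<beta> y) \<partial>lborel)"
      unfolding Phi_alt A_def[symmetric] using iA by simp
    also have "\<dots> = (\<integral>y. indicator S y * (x - \<beta> y) \<partial>lborel)"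
      by (rule Bochner_Integration.integral_cong) (use AS in \<open>auto simp: indicator_def\<close>)
    finally show ?thesis .
  qed
  also have "\<dots> = (\<integral>y. (x - \<beta> x) * indicator S y + indicator S y * (\<beta> x - \<beta> y) \<partial>lborel)"
    by (rule Bochner_Integration.integral_cong) (auto simp: algebra_simps)
  also have "\<dots> = (x - \<beta> x) * measure lborel S + (\<integral>y. indicator S y * (\<beta> x - \<beta> y) \<partial>lborel)"
    using iS2 iS3 finA[OF S01] Sb by (simp add: integral_indicator)
  finally show "Phi \<beta> x c' - Phi \<beta> x c = (x - \<beta> x) * measure lborel S + (\<integral>y. indicator S y * (\<beta> x - \<beta> y) \<partial>lborel)" .
  show "mm \<beta> c' - mm \<beta> c = measure lborel S"
    unfolding mm_def A_def[symmetric] AS(1)[symmetric]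
  proof (subst measure_Diff)
    have "A c' \<subseteq> {0..1}" by (auto simp: A_def)
    from finA[OF this] show "emeasure lborel (A c') \<noteq> \<infinity>" by simp
  qed (use AS Ab in auto)
  show "\<bar>Phi \<beta> x c' - Phi \<beta> x c\<bar> \<le> measure lborel S"
    unfolding d1 using int_bound[of S "\<lambda>y. x - \<beta> y" 1 1] S01 xb by (auto simp: S_def)
  assume h: "c \<le> \<beta> x" "\<beta> x \<le> c'"
  have "\<bar>\<beta> x - \<beta> y\<bar> \<le> c' - c" if "y \<in> S" for y using that h by (auto simp: S_def)
  then show "\<bar>\<integral>y. indicator S y * (\<beta> x - \<beta> y) \<partial>lborel\<bar> \<le> (c' - c) * measure lborel S"
    using int_bound[of S "\<lambda>y. \<beta> x - \<beta> y" 1 "c' - c"] S01 xb2 Sb by auto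
qed

lemma mm_beta: assumes "0 \<le> t" "t \<le> 1" shows "mm \<beta> (\<beta> t) = t"
proof -
  have "{y\<in>{0..1}. \<beta> y < \<beta> t} = {0..<t}"
  proof (intro set_eqI iffI)
    fix y assume y: "y \<in> {y\<in>{0..1}. \<beta> y < \<beta> t}"
    show "y \<in> {0..<t}"
    proof (rule ccontr)
      assume "y \<notin> {0..<t}"
      then have "t \<le> y" using y by auto
      then have "s * (y - t) \<le> \<beta> y - \<beta> t" using slope[of t y] assms y by auto
      moreover have "0 \<le> s * (y - t)" using spos \<open>t \<le> y\<close> by simp
      ultimately show False using y by simp
    qed
  next
    fix y assume y: "y \<in> {0..<t}"
    then have "s * (t - y) \<le> \<beta> t - \<beta> y" using slope[of y t] assms by auto
    moreover have "0 < s * (t - y)" using spos y by simp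
    ultimately show "y \<in> {y\<in>{0..1}. \<beta> y < \<beta> t}" using y assms by auto
  qed
  then show ?thesis using assms by (simp add: mm_def)
qed

lemma Phi_pt:
  assumes x: "0 \<le> x" "x \<le> 1"
  shows "\<bar>Phi \<beta> x c - Phi \<beta> x (\<beta> x) - (x - \<beta> x) * (mm \<beta> c - x)\<bar> \<le> \<bar>c - \<beta> x\<bar> * \<bar>mm \<beta> c - x\<bar>"
    and "\<bar>Phi \<beta> x c - Phi \<beta> x (\<beta> x)\<bar> \<le> \<bar>mm \<beta> c - x\<bar>"
    and "\<bar>mm \<beta> c - x\<bar> \<le> 2 * \<bar>c - \<beta> x\<bar> / s"
proof -
  have mx: "mm \<beta> (\<beta> x) = x" using mm_beta x by simp
  have "(\<bar>Phi \<beta> x c - Phi \<beta> x (\<beta> x) - (x - \<beta> x) * (mm \<beta> c - x)\<bar> \<le> \<bar>c - \<beta> x\<bar> * \<bar>mm \<beta> c - x\<bar>)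
    \<and> \<bar>Phi \<beta> x c - Phi \<beta> x (\<beta> x)\<bar> \<le> \<bar>mm \<beta> c - x\<bar> \<and> \<bar>mm \<beta> c - x\<bar> \<le> 2 * \<bar>c - \<beta> x\<bar> / s"
  proof (cases "\<beta> x \<le> c")
    case True
    note P = Phi_incr[OF True x]
    have m0: "0 \<le> measure lborel {y \<in> {0..1}. \<beta> x \<le> \<beta> y \<and> \<beta> y < c}" by simp
    from P(2) mx have e: "mm \<beta> c - x = measure lborel {y \<in> {0..1}. \<beta> x \<le> \<beta> y \<and> \<beta> y < c}" by simp
    show ?thesis using P(1,3) P(4)[OF order.refl True] measS[OF True] True m0 unfolding e
      by (auto simp: abs_mult)
  next
    case False
    then have F: "c \<le> \<beta> x" by simp
    note P = Phi_incr[OF F x]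
    have m0: "0 \<le> measure lborel {y \<in> {0..1}. c \<le> \<beta> y \<and> \<beta> y < \<beta> x}" by simp
    from P(2) mx have e: "mm \<beta> c - x = - measure lborel {y \<in> {0..1}. c \<le> \<beta> y \<and> \<beta> y < \<beta> x}" by simp
    show ?thesis using P(1,3) P(4)[OF F order.refl] measS[OF F] F m0 unfolding e
      by (auto simp: abs_mult abs_minus_commute)
  qed
  then show "\<bar>Phi \<beta> x c - Phi \<beta> x (\<beta> x) - (x - \<beta> x) * (mm \<beta> c - x)\<bar> \<le> \<bar>c - \<beta> x\<bar> * \<bar>mm \<beta> c - x\<bar>"
    and "\<bar>Phi \<beta> x c - Phi \<beta> x (\<beta> x)\<bar> \<le> \<bar>mm \<beta> c - x\<bar>"
    and "\<bar>mm \<beta> c - x\<bar> \<le> 2 * \<bar>c - \<beta> x\<bar> / s" by auto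
qed

end



context strat
begin

lemma Phi_bound: assumes "0 \<le> x" "x \<le> 1" shows "\<bar>Phi \<beta> x c\<bar> \<le> 1"
proof -
  have A01: "{y\<in>{0..1}. \<beta> y < c} \<subseteq> {0..1}" by auto
  have "\<bar>Phi \<beta> x c\<bar> \<le> 1 * measure lborel {y\<in>{0..1}. \<beta> y < c}"
    unfolding Phi_alt
  proof (rule int_bound[where B=1])
    have "\<bar>x - \<beta> y\<bar> \<le> 1" if "0 \<le> y" "y \<le> 1" for y using b01[OF that] assms by auto
    then show "\<And>y. 0 \<le> y \<Longrightarrow> y \<le> 1 \<Longrightarrow> \<bar>x - \<beta> y\<bar> \<le> 1"
      "\<And>y. y \<in> {y\<in>{0..1}. \<beta> y < c} \<Longrightarrow> \<bar>x - \<beta> y\<bar> \<le> 1" by auto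
  qed (use A01 in auto)
  also have "\<dots> \<le> 1"
  proof -
    have "emeasure lborel {y\<in>{0..1}. \<beta> y < c} \<le> emeasure lborel {0..1::real}"
      by (rule emeasure_mono[OF A01]) auto
    then show ?thesis by (simp add: measure_def enn2real_leI)
  qed
  finally show ?thesis .
qed

lemma Phi_int:
  assumes [measurable]: "c \<in> borel_measurable borel"
  shows "integrable lborel (\<lambda>x. indicator {0..1} x * Phi \<beta> x (c x))"
  by (rule int01[where B=1]) (auto intro: Phi_bound meas_Phi)

lemma U2_Phi: "U2 f \<beta> = (\<integral>x. indicator {0..1} x * Phi \<beta> x (f x) \<partial>lborel)"
proof -
  have "U2 f \<beta> = (LINT x:{0..1}|lborel. Phi \<beta> x (f x))" unfolding U2_def Phi_def ..
  also have "\<dots> = (\<integral>x. indicator {0..1} x * Phi \<beta> x (f x) \<partial>lborel)"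
    unfolding set_lebesgue_integral_def real_scaleR_def ..
  finally show ?thesis .
qed

lemma DU_eq:
  fixes d w :: "real \<Rightarrow> real" and D :: real and F :: "real set"
  assumes cd: "continuous_on UNIV d" and dD: "\<And>y. 0 \<le> y \<Longrightarrow> y \<le> 1 \<Longrightarrow> \<bar>d y\<bar> \<le> D"
    and wm[measurable]: "w \<in> borel_measurable borel"
    and F: "finite F"
    and lim: "\<And>x. 0 < x \<Longrightarrow> x < 1 \<Longrightarrow> x \<notin> F \<Longrightarrow> eventually (\<lambda>\<epsilon>. mm \<beta> (\<beta> x + \<epsilon> * d x) = x + \<epsilon> * w x) (at 0)"
  shows "DU \<beta> d = (LINT x:{0..1}|lborel. (x - \<beta> x) * w x)"
proof -
  have dm[measurable]: "d \<in> borel_measurable borel"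
    using borel_measurable_continuous_onI cd by blast
  define G where "G \<epsilon> x = (Phi \<beta> x (\<beta> x + \<epsilon> * d x) - Phi \<beta> x (\<beta> x)) / \<epsilon>" for \<epsilon> x
  define L where "L = (\<integral>x. indicator {0..1} x * ((x - \<beta> x) * w x) \<partial>lborel)"
  have Gm[measurable]: "G \<epsilon> \<in> borel_measurable borel" for \<epsilon>
    unfolding G_def by (intro borel_measurable_divide borel_measurable_diff meas_Phi) auto
  have fe: "(U2 (\<lambda>x. \<beta> x + \<epsilon> * d x) \<beta> - U2 \<beta> \<beta>) / \<epsilon> = (\<integral>x. indicator {0..1} x * G \<epsilon> x \<partial>lborel)" for \<epsilon>
  proof -
    have i1: "integrable lborel (\<lambda>x. indicator {0..1} x * Phi \<beta> x (\<beta> x + \<epsilon> * d x))"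
      by (rule Phi_int) auto
    have i2: "integrable lborel (\<lambda>x. indicator {0..1} x * Phi \<beta> x (\<beta> x))"
      by (rule Phi_int) auto
    have "U2 (\<lambda>x. \<beta> x + \<epsilon> * d x) \<beta> - U2 \<beta> \<beta> = (\<integral>x. indicator {0..1} x * Phi \<beta> x (\<beta> x + \<epsilon> * d x) - indicator {0..1} x * Phi \<beta> x (\<beta> x) \<partial>lborel)"
      unfolding U2_Phi using i1 i2 by simp
    then have "(U2 (\<lambda>x. \<beta> x + \<epsilon> * d x) \<beta> - U2 \<beta> \<beta>) / \<epsilon> = (\<integral>x. (indicator {0..1} x * Phi \<beta> x (\<beta> x + \<epsilon> * d x) - indicator {0..1} x * Phi \<beta> x (\<beta> x)) / \<epsilon> \<partial>lborel)"
      by simp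
    also have "\<dots> = (\<integral>x. indicator {0..1} x * G \<epsilon> x \<partial>lborel)"
      by (rule Bochner_Integration.integral_cong) (auto simp: G_def algebra_simps diff_divide_distrib)
    finally show ?thesis .
  qed
  have Gb: "\<bar>G \<epsilon> x\<bar> \<le> 2 * D / s" if "0 \<le> x" "x \<le> 1" for \<epsilon> x
  proof (cases "\<epsilon> = 0")
    case True
    have "0 \<le> \<bar>d x\<bar>" by simp
    then have "0 \<le> D" using dD[OF that] by linarith
    then show ?thesis using True spos by (simp add: G_def)
  next
    case False
    have "\<bar>Phi \<beta> x (\<beta> x + \<epsilon> * d x) - Phi \<beta> x (\<beta> x)\<bar> \<le> 2 * \<bar>\<epsilon> * d x\<bar> / s"
      using Phi_pt(2)[OF that, of "\<beta> x + \<epsilon> * d x"] Phi_pt(3)[OF that, of "\<beta> x + \<epsilon> * d x"] by simp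
    also have "\<dots> \<le> \<bar>\<epsilon>\<bar> * (2 * D / s)"
    proof -
      have "\<bar>\<epsilon>\<bar> * \<bar>d x\<bar> \<le> \<bar>\<epsilon>\<bar> * D" using dD[OF that] by (intro mult_left_mono) auto
      then show ?thesis using spos by (simp add: abs_mult field_simps mult.commute)
    qed
    finally show ?thesis using False by (simp add: G_def divide_le_eq abs_divide mult.commute)
  qed
  have eventually_neq_at0: "eventually (\<lambda>\<epsilon>. \<epsilon> \<noteq> 0) (at (0::real))"
    by (simp add: eventually_at_filter)
  have Glim: "((\<lambda>\<epsilon>. G \<epsilon> x) \<longlongrightarrow> (x - \<beta> x) * w x) (at 0)" if x: "0 < x" "x < 1" "x \<notin> F" for x
  proof -
    have "eventually (\<lambda>\<epsilon>. norm (G \<epsilon> x - (x - \<beta> x) * w x) \<le> \<bar>\<epsilon>\<bar> * \<bar>d x * w x\<bar>) (at 0)"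
      using lim[OF x] eventually_neq_at0
    proof eventually_elim
      case (elim \<epsilon>)
      note P = Phi_pt(1)[of x "\<beta> x + \<epsilon> * d x"]
      have "\<bar>Phi \<beta> x (\<beta> x + \<epsilon> * d x) - Phi \<beta> x (\<beta> x) - (x - \<beta> x) * (\<epsilon> * w x)\<bar> \<le> \<bar>\<epsilon> * d x\<bar> * \<bar>\<epsilon> * w x\<bar>"
        using P x elim(1) by simp
      then have "\<bar>(Phi \<beta> x (\<beta> x + \<epsilon> * d x) - Phi \<beta> x (\<beta> x)) / \<epsilon> - (x - \<beta> x) * w x\<bar> \<le> \<bar>\<epsilon>\<bar> * \<bar>d x * w x\<bar>"
        using elim(2) by (simp add: abs_mult field_simps abs_divide divide_le_eq)
      then show ?case by (simp add: G_def)
    qed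
    moreover have "((\<lambda>\<epsilon>. \<bar>\<epsilon>\<bar> * \<bar>d x * w x\<bar>) \<longlongrightarrow> 0) (at (0::real))"
      by (auto intro!: tendsto_eq_intros)
    ultimately have "((\<lambda>\<epsilon>. G \<epsilon> x - (x - \<beta> x) * w x) \<longlongrightarrow> 0) (at 0)"
      by (rule Lim_null_comparison)
    then show ?thesis by (simp add: LIM_zero_iff)
  qed
  have AEx: "AE x in lborel. x \<notin> insert 0 (insert 1 F)"
    by (rule AE_not_in, rule countable_imp_null_set_lborel) (use F in \<open>simp add: countable_finite\<close>)
  have "((\<lambda>\<epsilon>. \<integral>x. indicator {0..1} x * G \<epsilon> x \<partial>lborel) \<longlongrightarrow> L) (at 0)"
    unfolding tendsto_at_iff_sequentially L_def comp_def
  proof (intro allI impI)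
    fix X :: "nat \<Rightarrow> real" assume X0: "\<forall>i. X i \<in> UNIV - {0}" and X: "X \<longlonglongrightarrow> 0"
    have Xat: "filterlim X (at 0) sequentially"
      using X X0 by (intro filterlim_atI) auto
    show "(\<lambda>i. \<integral>x. indicator {0..1} x * G (X i) x \<partial>lborel) \<longlonglongrightarrow> (\<integral>x. indicator {0..1} x * ((x - \<beta> x) * w x) \<partial>lborel)"
    proof (rule integral_dominated_convergence[where w="\<lambda>x. indicator {0..1} x * (2 * D / s)"])
      show "integrable lborel (\<lambda>x::real. indicator {0..1} x * (2 * D / s))"
        by (intro integrable_mult_left) (simp add: integrable_indicator_iff)
      show "AE x in lborel. norm (indicator {0..1} x * G (X i) x) \<le> indicator {0..1} x * (2 * D / s)" for i
        by (intro AE_I2) (auto simp: indicator_def intro: Gb)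
      show "AE x in lborel. (\<lambda>i. indicator {0..1} x * G (X i) x) \<longlonglongrightarrow> indicator {0..1} x * ((x - \<beta> x) * w x)"
        using AEx
      proof eventually_elim
        case (elim x)
        show ?case
        proof (cases "x \<in> {0..1}")
          case True
          then have "0 < x" "x < 1" "x \<notin> F" using elim by auto
          from filterlim_compose[OF Glim[OF this] Xat]
          show ?thesis by (intro tendsto_mult tendsto_const) (simp add: comp_def)
        qed simp
      qed
      show "(\<lambda>x. indicator {0..1} x * G (X i) x) \<in> borel_measurable lborel" for i
        by measurable
      show "(\<lambda>x. indicator {0..1} x * ((x - \<beta> x) * w x)) \<in> borel_measurable lborel"
        by measurable
    qed
  qed
  then have "((\<lambda>\<epsilon>. (U2 (\<lambda>x. \<beta> x + \<epsilon> * d x) \<beta> - U2 \<beta> \<beta>) / \<epsilon>) \<longlongrightarrow> L) (at 0)"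
    unfolding fe .
  then have "DU \<beta> d = L"
    unfolding DU_def by (intro tendsto_Lim) (auto simp: trivial_limit_at)
  then show ?thesis by (simp add: L_def set_lebesgue_integral_def)
qed



end



lemma (in strat) mm_local:
  assumes "0 \<le> l" "l < x" "x < r" "r \<le> 1" "\<sigma> \<noteq> 0"
    and lin: "\<And>t. l < t \<Longrightarrow> t < r \<Longrightarrow> \<beta> t = \<beta> x + \<sigma> * (t - x)"
  shows "eventually (\<lambda>\<epsilon>. mm \<beta> (\<beta> x + \<epsilon> * dx) = x + \<epsilon> * (dx / \<sigma>)) (at 0)"
proof -
  have lim: "((\<lambda>\<epsilon>. x + \<epsilon> * (dx / \<sigma>)) \<longlongrightarrow> x) (at 0)"
    by (rule tendsto_eq_intros tendsto_const tendsto_ident_at | simp)+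
  have "eventually (\<lambda>\<epsilon>. l < x + \<epsilon> * (dx / \<sigma>)) (at 0)"
    using order_tendstoD(1)[OF lim assms(2)] .
  moreover have "eventually (\<lambda>\<epsilon>. x + \<epsilon> * (dx / \<sigma>) < r) (at 0)"
    using order_tendstoD(2)[OF lim assms(3)] .
  ultimately show ?thesis
  proof eventually_elim
    case (elim \<epsilon>)
    let ?t = "x + \<epsilon> * (dx / \<sigma>)"
    have "\<beta> ?t = \<beta> x + \<epsilon> * dx" using lin[OF elim] assms(5) by simp
    then have "mm \<beta> (\<beta> x + \<epsilon> * dx) = mm \<beta> (\<beta> ?t)" by simp
    also have "\<dots> = ?t" by (rule mm_beta) (use elim assms in auto)
    finally show ?case .
  qed
qed

definition b1 :: "real \<Rightarrow> real" where "b1 x = 7/20 * x"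
definition b2 :: "real \<Rightarrow> real" where
  "b2 x = x/10 + 3/5 * min x (1/4) + 1/5 * max 0 (x - 7/10)"
definition g2 :: "real \<Rightarrow> real" where
  "g2 t = 1/10 + 3/5 * indicator {..<1/4} t + 1/5 * indicator {7/10<..} t"

lemma strat_b1: "strat b1 (1/10)"
  unfolding strat_def b1_def by (auto intro!: continuous_intros)

lemma strat_b2: "strat b2 (1/10)"
proof
  show "continuous_on UNIV b2" unfolding b2_def by (intro continuous_intros) auto
  show "y \<le> z \<Longrightarrow> 1/10 * (z - y) \<le> b2 z - b2 y" for y z
    unfolding b2_def by (simp add: min_def max_def)
  show "0 \<le> y \<Longrightarrow> y \<le> 1 \<Longrightarrow> 0 \<le> b2 y \<and> b2 y \<le> 1" for y
    unfolding b2_def min_def max_def by (auto split: if_splits simp: field_simps)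
qed simp

lemma dd_bound: "0 \<le> y \<Longrightarrow> y \<le> 1 \<Longrightarrow> \<bar>b2 y - b1 y\<bar> \<le> 1"
  using strat.b01[OF strat_b1, of y] strat.b01[OF strat_b2, of y] by auto

lemma cont_dd: "continuous_on UNIV (\<lambda>x. b2 x - b1 x)"
  using strat.bm[OF strat_b1] strat.bm[OF strat_b2] by (intro continuous_intros)

lemma DU_b1: "DU b1 (\<lambda>x. b2 x - b1 x) = (LINT x:{0..1}|lborel. (x - b1 x) * ((b2 x - b1 x) / (7/20)))"
proof (rule strat.DU_eq[OF strat_b1 cont_dd dd_bound, where F="{}"])
  show "(\<lambda>x. (b2 x - b1 x) / (7/20)) \<in> borel_measurable borel"
    using cont_dd by (intro borel_measurable_divide borel_measurable_continuous_onI) auto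
  fix x :: real assume x: "0 < x" "x < 1"
  show "\<forall>\<^sub>F \<epsilon> in at 0. mm b1 (b1 x + \<epsilon> * (b2 x - b1 x)) = x + \<epsilon> * ((b2 x - b1 x) / (7 / 20))"
    by (rule strat.mm_local[OF strat_b1, where l=0 and r=1]) (use x in \<open>auto simp: b1_def field_simps\<close>)
qed auto

lemma DU_b2: "DU b2 (\<lambda>x. b2 x - b1 x) = (LINT x:{0..1}|lborel. (x - b2 x) * ((b2 x - b1 x) / g2 x))"
proof (rule strat.DU_eq[OF strat_b2 cont_dd dd_bound, where F="{1/4, 7/10}"])
  show "(\<lambda>x. (b2 x - b1 x) / g2 x) \<in> borel_measurable borel"
  proof -
    have [measurable]: "g2 \<in> borel_measurable borel" unfolding g2_def by measurable
    have [measurable]: "(\<lambda>x. b2 x - b1 x) \<in> borel_measurable borel"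
      using cont_dd borel_measurable_continuous_onI by blast
    show ?thesis by measurable
  qed
  fix x :: real assume x: "0 < x" "x < 1" "x \<notin> {1/4, 7/10}"
  consider "x < 1/4" | "1/4 < x" "x < 7/10" | "7/10 < x" using x by force
  then show "\<forall>\<^sub>F \<epsilon> in at 0. mm b2 (b2 x + \<epsilon> * (b2 x - b1 x)) = x + \<epsilon> * ((b2 x - b1 x) / g2 x)"
  proof cases
    case 1
    then have g: "g2 x = 7/10" by (simp add: g2_def)
    have "\<forall>\<^sub>F \<epsilon> in at 0. mm b2 (b2 x + \<epsilon> * (b2 x - b1 x)) = x + \<epsilon> * ((b2 x - b1 x) / (7/10))"
      by (rule strat.mm_local[OF strat_b2, where l=0 and r="1/4"])
         (use x 1 in \<open>auto simp: b2_def min_def max_def field_simps\<close>)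
    then show ?thesis by (simp only: g)
  next
    case 2
    then have g: "g2 x = 1/10" by (simp add: g2_def)
    have "\<forall>\<^sub>F \<epsilon> in at 0. mm b2 (b2 x + \<epsilon> * (b2 x - b1 x)) = x + \<epsilon> * ((b2 x - b1 x) / (1/10))"
      by (rule strat.mm_local[OF strat_b2, where l="1/4" and r="7/10"])
         (use x 2 in \<open>auto simp: b2_def min_def max_def field_simps\<close>)
    then show ?thesis by (simp only: g)
  next
    case 3
    then have g: "g2 x = 3/10" by (simp add: g2_def)
    have "\<forall>\<^sub>F \<epsilon> in at 0. mm b2 (b2 x + \<epsilon> * (b2 x - b1 x)) = x + \<epsilon> * ((b2 x - b1 x) / (3/10))"
      by (rule strat.mm_local[OF strat_b2, where l="7/10" and r="1"])
         (use x 3 in \<open>auto simp: b2_def min_def max_def field_simps\<close>)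
    then show ?thesis by (simp only: g)
  qed
qed auto



lemma poly_int:
  fixes a b p q r :: real
  assumes "a \<le> b"
  shows "((\<lambda>x. p + q * x + r * x^2) has_integral
          (p * (b - a) + q * (b^2 - a^2) / 2 + r * (b^3 - a^3) / 3)) {a..b}"
proof -
  define P where "P x = p * x + q * x^2 / 2 + r * x^3 / 3" for x :: real
  have "((\<lambda>x. p + q * x + r * x^2) has_integral (P b - P a)) {a..b}"
  proof (rule fundamental_theorem_of_calculus[OF assms])
    fix x assume "x \<in> {a..b}"
    have "(P has_real_derivative (p + q * x + r * x^2)) (at x within {a..b})"
      unfolding P_def by (auto intro!: derivative_eq_intros simp: power2_eq_square)
    then show "(P has_vector_derivative (p + q * x + r * x^2)) (at x within {a..b})"
      by (simp add: has_real_derivative_iff_has_vector_derivative)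
  qed
  moreover have "P b - P a = p * (b - a) + q * (b^2 - a^2) / 2 + r * (b^3 - a^3) / 3"
    unfolding P_def by (simp add: algebra_simps diff_divide_distrib)
  ultimately show ?thesis by simp
qed

lemma piece_int:
  fixes f :: "real \<Rightarrow> real"
  assumes "a \<le> b" "finite S" "\<And>x. a \<le> x \<Longrightarrow> x \<le> b \<Longrightarrow> x \<notin> S \<Longrightarrow> f x = p + q * x + r * x^2"
    and "I = p * (b - a) + q * (b^2 - a^2) / 2 + r * (b^3 - a^3) / 3"
  shows "(f has_integral I) {a..b}"
  using has_integral_spike_finite[OF assms(2) _ poly_int[OF assms(1), of p q r]] assms(3,4) by auto

lemma three_int:
  fixes f :: "real \<Rightarrow> real"
  assumes "(f has_integral I1) {0..1/4}" "(f has_integral I2) {1/4..7/10}" "(f has_integral I3) {7/10..1}"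
  shows "(f has_integral (I1 + I2 + I3)) {0..1}"
proof -
  have "(f has_integral (I1 + I2)) {0..7/10}"
    by (rule has_integral_combine[where c="1/4"]) (use assms in auto)
  from has_integral_combine[where c="7/10", OF _ _ this assms(3)] show ?thesis by simp
qed

lemma I1: "((\<lambda>x. (x - b1 x) * ((b2 x - b1 x) / (7/20))) has_integral (-5603/1680000)) {0..1}"
proof -
  have "((\<lambda>x. (x - b1 x) * ((b2 x - b1 x) / (7/20))) has_integral (13/3840 + 1989/224000 + (-39/2500))) {0..1}"
  proof (rule three_int)
    show "((\<lambda>x. (x - b1 x) * ((b2 x - b1 x) / (7/20))) has_integral 13/3840) {0..1/4}"
      by (rule piece_int[where S="{}" and p=0 and q=0 and r="13/20"])
         (auto simp: b1_def b2_def min_def max_def power2_eq_square field_simps)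
    show "((\<lambda>x. (x - b1 x) * ((b2 x - b1 x) / (7/20))) has_integral 1989/224000) {1/4..7/10}"
      by (rule piece_int[where S="{}" and p=0 and q="39/140" and r="-13/28"])
         (auto simp: b1_def b2_def min_def max_def power2_eq_square field_simps)
    show "((\<lambda>x. (x - b1 x) * ((b2 x - b1 x) / (7/20))) has_integral (-39/2500)) {7/10..1}"
      by (rule piece_int[where S="{}" and p=0 and q="13/700" and r="-13/140"])
         (auto simp: b1_def b2_def min_def max_def power2_eq_square field_simps)
  qed
  then show ?thesis by simp
qed

lemma I2: "((\<lambda>x. (x - b2 x) * ((b2 x - b1 x) / g2 x)) has_integral (551/160000)) {0..1}"
proof -
  have "((\<lambda>x. (x - b2 x) * ((b2 x - b1 x) / g2 x)) has_integral (1/1280 + 351/16000 + (-771/40000))) {0..1}"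
  proof (rule three_int)
    show "((\<lambda>x. (x - b2 x) * ((b2 x - b1 x) / g2 x)) has_integral 1/1280) {0..1/4}"
      by (rule piece_int[where S="{1/4}" and p=0 and q=0 and r="3/20"])
         (auto simp: b1_def b2_def g2_def min_def max_def power2_eq_square field_simps)
    show "((\<lambda>x. (x - b2 x) * ((b2 x - b1 x) / g2 x)) has_integral 351/16000) {1/4..7/10}"
      by (rule piece_int[where S="{1/4, 7/10}" and p="-9/40" and q="69/40" and r="-9/4"])
         (auto simp: b1_def b2_def g2_def min_def max_def power2_eq_square field_simps)
    show "((\<lambda>x. (x - b2 x) * ((b2 x - b1 x) / g2 x)) has_integral (-771/40000)) {7/10..1}"
      by (rule piece_int[where S="{7/10}" and p="-1/3000" and q="1/40" and r="-7/60"])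
         (auto simp: b1_def b2_def g2_def min_def max_def power2_eq_square field_simps)
  qed
  then show ?thesis by simp
qed



lemma meas_Icc: "(a::real) \<le> b \<Longrightarrow> measure lborel {a..b} = b - a"
  by (simp add: measure_def)
lemma meas_Ico: "(a::real) \<le> b \<Longrightarrow> measure lborel {a..<b} = b - a"
  by (simp add: measure_def)
lemma meas_Ioc: "measure lborel {a<..(b::real)} = max 0 (b - a)"
  by (cases "a \<le> b") (auto simp: measure_def max_def)

lemma int_ind: "integrable lborel (\<lambda>t. c * indicator A t :: real)" if "A \<in> sets borel" "emeasure lborel A < \<infinity>"
  using that by (intro integrable_mult_right) (simp add: integrable_indicator_iff)

lemma g2_int:
  assumes x: "0 \<le> x" "x \<le> 1"
  shows "(LINT t:{0..x}|lborel. g2 t) = b2 x"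
proof -
  define A where "A = (if x < 1/4 then {0..x} else {0..<1/4::real})"
  have A: "A \<in> sets borel" "emeasure lborel A < \<infinity>" "measure lborel A = min x (1/4)"
    using x by (auto simp: A_def meas_Icc meas_Ico)
  have B: "{7/10<..x} \<in> sets borel" "emeasure lborel {7/10<..x} < \<infinity>"
    by (cases "7/10 \<le> x"; simp)+
  have C: "{0..x} \<in> sets borel" "emeasure lborel {0..x} < \<infinity>" using x by auto
  have "(LINT t:{0..x}|lborel. g2 t) = (\<integral>t. 1/10 * indicator {0..x} t + 3/5 * indicator A t + 1/5 * indicator {7/10<..x} t \<partial>lborel)"
    unfolding set_lebesgue_integral_def
    by (rule Bochner_Integration.integral_cong) (auto simp: g2_def A_def indicator_def)
  also have "\<dots> = 1/10 * measure lborel {0..x} + 3/5 * measure lborel A + 1/5 * measure lborel {7/10<..x}"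
    using int_ind[OF A(1,2)] int_ind[OF B] int_ind[OF C] A B C by (simp add: integral_indicator)
  also have "\<dots> = b2 x"
    using x A(3) by (simp add: meas_Icc meas_Ioc b2_def)
  finally show ?thesis .
qed

lemma set_int01:
  fixes f :: "real \<Rightarrow> real"
  assumes "f \<in> borel_measurable borel" "\<And>x. 0 \<le> x \<Longrightarrow> x \<le> 1 \<Longrightarrow> \<bar>f x\<bar> \<le> B"
  shows "set_integrable lborel {0..1} f"
  unfolding set_integrable_def using int01[OF assms] by simp

lemma b1_strat: assumes "0 < \<delta>" "\<delta> < 9/100" shows "b1 \<in> strategies \<delta>"
  unfolding strategies_def
proof (intro CollectI exI[of _ "\<lambda>_::real. 7/20::real"] conjI)
  show "set_integrable lborel {0..1} (\<lambda>_::real. 7/20 :: real)"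
    by (rule set_int01[of "\<lambda>_. 7/20" 1]) auto
  show "\<forall>x\<in>{0..1}. b1 x = b1 0 + (LINT t:{0..x}|lborel. 7/20)"
    by (auto simp: set_integral_const meas_Icc b1_def)
  show "AE x in lborel. x \<in> {0<..<1} \<longrightarrow> \<delta> \<le> 7/20" using assms by simp
  show "AE x in lborel. x \<in> {0<..<1} \<longrightarrow> 0 \<le> b1 x \<and> b1 x \<le> 1" by (auto simp: b1_def)
  show "b1 0 = 0" by (simp add: b1_def)
qed

lemma b2_strat: assumes "0 < \<delta>" "\<delta> < 9/100" shows "b2 \<in> strategies \<delta>"
proof -
  have [measurable]: "g2 \<in> borel_measurable borel" unfolding g2_def by measurable
  show ?thesis
  unfolding strategies_def
proof (intro CollectI exI[of _ "g2"] conjI)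
  show "set_integrable lborel {0..1} g2"
    by (rule set_int01[where B=1]) (auto simp: g2_def indicator_def)
  show "\<forall>x\<in>{0..1}. b2 x = b2 0 + (LINT t:{0..x}|lborel. g2 t)"
    using g2_int by (auto simp: b2_def)
  show "AE x in lborel. x \<in> {0<..<1} \<longrightarrow> \<delta> \<le> g2 x" using assms by (auto simp: g2_def indicator_def)
  show "AE x in lborel. x \<in> {0<..<1} \<longrightarrow> 0 \<le> b2 x \<and> b2 x \<le> 1"
    using strat.b01[OF strat_b2] by auto
  show "b2 0 = 0" by (simp add: b2_def)
qed
qed

lemma DU1: "DU b1 (\<lambda>x. b2 x - b1 x) = -5603/1680000"
proof -
  have "set_integrable lborel {0..1} (\<lambda>x. (x - b1 x) * ((b2 x - b1 x) / (7/20)))"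
  proof (rule set_int01[where B=3])
    have [measurable]: "b1 \<in> borel_measurable borel" "b2 \<in> borel_measurable borel"
      using strat.bmeas[OF strat_b1] strat.bmeas[OF strat_b2] by auto
    show "(\<lambda>x. (x - b1 x) * ((b2 x - b1 x) / (7/20))) \<in> borel_measurable borel" by measurable
    fix x :: real assume x: "0 \<le> x" "x \<le> 1"
    have "\<bar>x - b1 x\<bar> \<le> 1" "\<bar>b2 x - b1 x\<bar> \<le> 1"
      using strat.b01[OF strat_b1, of x] strat.b01[OF strat_b2, of x] x by auto
    then have "\<bar>x - b1 x\<bar> * \<bar>b2 x - b1 x\<bar> \<le> 1" by (metis abs_ge_zero mult_le_one)
    moreover have "\<bar>(x - b1 x) * ((b2 x - b1 x) / (7/20))\<bar> = (\<bar>x - b1 x\<bar> * \<bar>b2 x - b1 x\<bar>) * (20/7)"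
    proof -
      have h: "\<bar>b2 x * 20 - b1 x * 20\<bar> = \<bar>b2 x - b1 x\<bar> * 20" by (cases "b2 x \<ge> b1 x") auto
      show ?thesis by (simp add: abs_mult abs_divide divide_simps h)
    qed
    moreover have "\<bar>x - b1 x\<bar> * \<bar>b2 x - b1 x\<bar> * (20/7) \<le> 1 * (20/7)"
      using \<open>\<bar>x - b1 x\<bar> * \<bar>b2 x - b1 x\<bar> \<le> 1\<close> by (intro mult_right_mono) auto
    ultimately show "\<bar>(x - b1 x) * ((b2 x - b1 x) / (7/20))\<bar> \<le> 3" by argo
  qed
  from set_borel_integral_eq_integral(2)[OF this]
  show ?thesis unfolding DU_b1 using integral_unique[OF I1] by simp
qed

lemma DU2: "DU b2 (\<lambda>x. b2 x - b1 x) = 551/160000"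
proof -
  have "set_integrable lborel {0..1} (\<lambda>x. (x - b2 x) * ((b2 x - b1 x) / g2 x))"
  proof (rule set_int01[where B=10])
    have [measurable]: "b1 \<in> borel_measurable borel" "b2 \<in> borel_measurable borel"
      using strat.bmeas[OF strat_b1] strat.bmeas[OF strat_b2] by auto
    have [measurable]: "g2 \<in> borel_measurable borel" unfolding g2_def by measurable
    show "(\<lambda>x. (x - b2 x) * ((b2 x - b1 x) / g2 x)) \<in> borel_measurable borel" by measurable
    fix x :: real assume x: "0 \<le> x" "x \<le> 1"
    have "\<bar>x - b2 x\<bar> \<le> 1" "\<bar>b2 x - b1 x\<bar> \<le> 1"
      using strat.b01[OF strat_b1, of x] strat.b01[OF strat_b2, of x] x by auto
    then have "\<bar>x - b2 x\<bar> * \<bar>b2 x - b1 x\<bar> \<le> 1" by (metis abs_ge_zero mult_le_one)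
    moreover have "1/10 \<le> g2 x" by (auto simp: g2_def indicator_def)
    moreover have "\<bar>(x - b2 x) * ((b2 x - b1 x) / g2 x)\<bar> = (\<bar>x - b2 x\<bar> * \<bar>b2 x - b1 x\<bar>) / g2 x"
      using \<open>1/10 \<le> g2 x\<close> by (simp add: abs_mult abs_divide)
    ultimately show "\<bar>(x - b2 x) * ((b2 x - b1 x) / g2 x)\<bar> \<le> 10"
      by (simp add: divide_le_eq)
  qed
  from set_borel_integral_eq_integral(2)[OF this]
  show ?thesis unfolding DU_b2 using integral_unique[OF I2] by simp
qed

theorem proposition1:
  fixes \<delta> :: real
  assumes "0 < \<delta>" and "\<delta> < 9/100"
  shows "\<not> DU_monotone \<delta> \<and> \<not> DU_pseudo_monotone \<delta> \<and> \<not> DU_quasi_monotone \<delta>"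
proof -
  have s1: "b1 \<in> strategies \<delta>" and s2: "b2 \<in> strategies \<delta>"
    using b1_strat[OF assms] b2_strat[OF assms] by auto
  show ?thesis
    unfolding DU_monotone_def DU_pseudo_monotone_def DU_quasi_monotone_def
    using s1 s2 DU1 DU2 by force
qed


end
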